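(* Assume the standing hypotheses (H). There is a constant $C_1>0$ depending only on $\Phi_K$, $f$ and $M$ (in particular independent of $\Omega\ge1$, $\lambda$ and $\rho$) such that $\|\rho\|_\infty\le C_1$.
   Context: Standing hypotheses (H): $K\subset\mathbb{R}^3$ is a bounded axisymmetric domain (invariant under rotations about the $x_3$-axis) satisfying the no-trapping condition (whenever $(x,y,z)\notin K$, the half line $(x,y,z)+t(x,y,0)$, $t\ge0$, lies in $\mathbb{R}^3\setminus K$). $f:[0,\infty)\to[0,\infty)$ satisfies (F1) non-negative, continuous, strictly increasing for $s>0$; (F2) $\lim_{s\to0}f(s)s^{-4/3}=0$, $\lim_{s\to\infty}f(s)s^{-4/3}=\infty$; (F3) $\liminf_{s\to\infty}f(s)s^{-\gamma}>0$ for some $\gamma>4/3$; (F4) $f\in C^1(0,\infty)$ and $\liminf_{s\to0}f'(s)s^{-\mu}>0$ for some $\mu>0$. $A(s)=s\int_0^s\frac{f(t)}{t^2}dt$. For $q>3$, $\rho_K\in L^q(K)$ is non-negative and axisymmetric and $\Phi_K(\mathbf{x})=\int_K\frac{\rho_K(\mathbf{y})}{|\mathbf{x}-\mathbf{y}|}d\mathbf{y}$. $M>0$; $\Omega\ge1$ is a constant. For $\rho$ on $\mathbb{R}^3\setminus K$, $B\rho(\mathbf{x})=\int_{\mathbb{R}^3\setminus K}\frac{\rho(\mathbf{y})}{|\mathbf{x}-\mathbf{y}|}d\mathbf{y}$. $\rho:\mathbb{R}^3\setminus K\to[0,\infty)$ is bounded and continuous with $\int\rho=M$, and there is a constant $\lambda$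 such that $A'(\rho)-B\rho-\frac12\Omega^2r^2-\Phi_K=\lambda$ on $\{\rho>0\}$, where $r=\sqrt{x_1^2+x_2^2}$. *)

theory Defs
  imports "HOL-Analysis.Analysis"
begin

type_synonym pt = "real ^ 3"

definition rot3 :: "real \<Rightarrow> pt \<Rightarrow> pt" where
  "rot3 th x = vector [cos th * x$1 - sin th * x$2, sin th * x$1 + cos th * x$2, x$3]"

definition cyl_r :: "pt \<Rightarrow> real" where
  "cyl_r x = sqrt ((x$1)^2 + (x$2)^2)"

definition axisym_set :: "pt set \<Rightarrow> bool" where
  "axisym_set K \<longleftrightarrow> (\<forall>th x. x \<in> K \<longrightarrow> rot3 th x \<in> K)"

definition axisym_fun_on :: "pt set \<Rightarrow> (pt \<Rightarrow> real) \<Rightarrow> bool" where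
  "axisym_fun_on K g \<longleftrightarrow> (\<forall>th x. x \<in> K \<longrightarrow> g (rot3 th x) = g x)"

definition no_trapping :: "pt set \<Rightarrow> bool" where
  "no_trapping K \<longleftrightarrow>
     (\<forall>x. x \<notin> K \<longrightarrow> (\<forall>t\<ge>0. x + t *\<^sub>R vector [x$1, x$2, 0] \<notin> K))"

definition in_Lq :: "real \<Rightarrow> pt set \<Rightarrow> (pt \<Rightarrow> real) \<Rightarrow> bool" where
  "in_Lq q K g \<longleftrightarrow> set_borel_measurable lebesgue K g
      \<and> set_integrable lebesgue K (\<lambda>y. \<bar>g y\<bar> powr q)"

definition A_fun :: "(real \<Rightarrow> real) \<Rightarrow> real \<Rightarrow> real" where
  "A_fun f s = s * (LBINT t=0..s. f t / t^2)"

definition newton_pot :: "pt set \<Rightarrow> (pt \<Rightarrow> real) \<Rightarrow> pt \<Rightarrow> real" where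
  "newton_pot S g x = (LINT y:S|lebesgue. g y / dist x y)"

definition F_hyps :: "(real \<Rightarrow> real) \<Rightarrow> bool" where
  "F_hyps f \<longleftrightarrow>
     (\<forall>s\<ge>0. f s \<ge> 0) \<and> continuous_on {0..} f \<and> strict_mono_on {0<..} f
   \<and> ((\<lambda>s. f s / s powr (4/3)) \<longlongrightarrow> 0) (at_right 0)
   \<and> filterlim (\<lambda>s. f s / s powr (4/3)) at_top at_top
   \<and> (\<exists>\<gamma>>4/3. Liminf at_top (\<lambda>s. ereal (f s / s powr \<gamma>)) > 0)
   \<and> f C1_differentiable_on {0<..}
   \<and> (\<exists>\<mu>>0. Liminf (at_right 0) (\<lambda>s. ereal (deriv f s / s powr \<mu>)) > 0)"

end

theory Submission
  imports Defs
begin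


lemma arith1:
  fixes R p :: real and k :: nat
  assumes "R > 0"
  shows "(R/2^(k+1)) powr (-p) * (R/2^k)^3 = 2 powr p * R powr (3-p) * (2 powr (p-3))^k"
proof -
  have l1: "ln ((2::real)^(k+1)) = real (k+1) * ln 2" by (rule ln_realpow) simp?
  have l2: "ln ((2::real)^k) = real k * ln 2" by (rule ln_realpow) simp?
  have e1: "(R/2^(k+1)) powr (-p) = exp (-p * (ln R - (k+1) * ln 2))"
    using assms by (simp only: powr_def ln_div l1) simp
  have e2: "(R/2^k)^3 = exp (3 * (ln R - k * ln 2))"
  proof -
    have "(R/2^k)^3 = (R/2^k) powr (real 3)" using assms by (subst powr_realpow) auto
    also have "... = exp (3 * (ln R - k * ln 2))" using assms by (simp only: powr_def ln_div l2) simp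
    finally show ?thesis .
  qed
  have e3: "(2 powr (p-3))^k = exp (k * ((p-3) * ln 2))"
    by (simp add: powr_def flip: exp_of_nat_mult)
  have e4: "2 powr p * R powr (3-p) = exp (p * ln 2 + (3-p) * ln R)"
    using assms by (simp add: powr_def exp_add)
  show ?thesis unfolding e1 e2 e3 e4 by (simp flip: exp_add) (simp add: algebra_simps)
qed

lemma dyadic_k:
  fixes d R :: real
  assumes "0 < d" "d < R"
  shows "\<exists>k::nat. R / 2^(k+1) \<le> d \<and> d < R / 2^k"
proof -
  obtain n::nat where n: "R/d \<le> 2^n" using real_arch_pow[of 2 "R/d"] by (auto intro: less_imp_le)
  define m where "m = (LEAST n::nat. R/d \<le> 2^n)"
  have m1: "R/d \<le> 2^m" unfolding m_def by (rule LeastI[of _ n]) (rule n)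
  have "R/d > 1" using assms by simp
  hence "m \<noteq> 0" using m1 by (cases m) auto
  then obtain k where k: "m = Suc k" by (cases m) auto
  have "\<not> R/d \<le> 2^k" using k unfolding m_def
    by (metis Least_le Suc_n_not_le_n)
  hence a: "2^k < R/d" by simp
  have b: "R/d \<le> 2^(k+1)" using m1 k by simp
  have "R / 2^(k+1) \<le> d" using b assms by (simp add: field_simps)
  moreover have "d < R/2^k" using a assms
    by (simp add: divide_simps mult.commute)
  ultimately show ?thesis by blast
qed

lemma kernel_bound:
  fixes x :: pt and p R :: real
  assumes p: "0 < p" "p < 3" and R: "R > 0"
  shows "(\<integral>\<^sup>+y. indicator (ball x R) y * ennreal (dist x y powr (-p)) \<partial>lborel)
     \<le> ennreal (unit_ball_vol 3 * 2 powr p / (1 - 2 powr (p-3)) * R powr (3-p))"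
proof -
  define c where "c k = (R/2^(k+1)) powr (-p)" for k::nat
  define r where "r k = R/2^k" for k::nat
  have pw: "indicator (ball x R) y * ennreal (dist x y powr (-p))
      \<le> (\<Sum>k. ennreal (c k) * indicator (ball x (r k)) y)" for y
  proof (cases "y \<in> ball x R \<and> y \<noteq> x")
    case True
    then have d: "0 < dist x y" "dist x y < R" by (auto simp: dist_commute)
    obtain k where k: "R/2^(k+1) \<le> dist x y" "dist x y < R/2^k" using dyadic_k[OF d] by auto
    have "dist x y powr (-p) \<le> c k" unfolding c_def
      by (rule powr_mono2') (use p k R in auto)
    hence "indicator (ball x R) y * ennreal (dist x y powr (-p)) \<le> ennreal (c k) * indicator (ball x (r k)) y"
      using True k by (auto simp: r_def ennreal_leI)
    also have "\<dots> \<le> (\<Sum>k. ennreal (c k) * indicator (ball x (r k)) y)"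
    proof -
      define h where "h k = ennreal (c k) * indicator (ball x (r k)) y" for k
      have "sum h {k} \<le> suminf h" by (rule sum_le_suminf[OF summableI]) auto
      moreover have "sum h {k} = h k" by simp
      ultimately show ?thesis unfolding h_def[abs_def] by simp
    qed
    finally show ?thesis .
  next
    case False then show ?thesis by auto
  qed
  have g: "summable (\<lambda>k. (2 powr (p-3))^k)"
  proof -
    have "2 powr (p-3) < 2 powr 0" using p by (intro powr_less_mono) auto
    thus ?thesis by simp
  qed
  have "(\<integral>\<^sup>+y. indicator (ball x R) y * ennreal (dist x y powr (-p)) \<partial>lborel)
      \<le> (\<integral>\<^sup>+y. (\<Sum>k. ennreal (c k) * indicator (ball x (r k)) y) \<partial>lborel)"
    by (rule nn_integral_mono) (rule pw)
  also have "\<dots> = (\<Sum>k. \<integral>\<^sup>+y. ennreal (c k) * indicator (ball x (r k)) y \<partial>lborel)"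
    by (rule nn_integral_suminf) (measurable, simp add: pred_def)
  also have "\<dots> = (\<Sum>k. ennreal (c k) * emeasure lborel (ball x (r k)))"
    by (simp add: nn_integral_cmult_indicator)
  also have "\<dots> = (\<Sum>k. ennreal (unit_ball_vol 3 * 2 powr p * R powr (3-p) * (2 powr (p-3))^k))"
  proof (rule suminf_cong)
    fix k
    have "c k * (unit_ball_vol 3 * r k ^ 3) = unit_ball_vol 3 * ((R/2^(k+1)) powr (-p) * (R/2^k)^3)"
      by (simp add: c_def r_def)
    also have "\<dots> = unit_ball_vol 3 * 2 powr p * R powr (3-p) * (2 powr (p-3))^k"
      using arith1[OF R, where p=p and k=k] by simp
    finally have ck: "c k * (unit_ball_vol 3 * r k ^ 3) = unit_ball_vol 3 * 2 powr p * R powr (3-p) * (2 powr (p-3))^k" .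
    have ck0: "c k \<ge> 0" by (simp add: c_def)
    show "ennreal (c k) * emeasure lborel (ball x (r k)) = ennreal (unit_ball_vol 3 * 2 powr p * R powr (3-p) * (2 powr (p-3))^k)"
    proof -
      have "r k \<ge> 0" using R by (simp add: r_def)
      have em: "emeasure lborel (ball x (r k)) = ennreal (unit_ball_vol 3 * r k ^ 3)"
        using emeasure_ball[where c=x and r="r k"] \<open>r k \<ge> 0\<close> by simp
      have "ennreal (c k) * ennreal (unit_ball_vol 3 * r k ^ 3) = ennreal (c k * (unit_ball_vol 3 * r k ^ 3))"
        by (rule ennreal_mult[symmetric]) (use ck0 \<open>r k \<ge> 0\<close> in auto)
      then show ?thesis unfolding em ck by simp
    qed
  qed
  also have "\<dots> = ennreal (\<Sum>k. unit_ball_vol 3 * 2 powr p * R powr (3-p) * (2 powr (p-3))^k)"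
    by (rule suminf_ennreal2) (use g in \<open>auto intro: summable_mult\<close>)
  also have "(\<Sum>k. unit_ball_vol 3 * 2 powr p * R powr (3-p) * (2 powr (p-3))^k)
      = unit_ball_vol 3 * 2 powr p / (1 - 2 powr (p-3)) * R powr (3-p)"
  proof -
    have "2 powr (p-3) < 2 powr 0" using p by (intro powr_less_mono) auto
    hence "norm (2 powr (p-3)) < (1::real)" by simp
    from suminf_mult[OF g, of "unit_ball_vol 3 * 2 powr p * R powr (3-p)"] suminf_geometric[OF this]
    show ?thesis by simp
  qed
  finally show ?thesis .
qed



lemma integral_le_from_nn:
  fixes h :: "'a \<Rightarrow> real"
  assumes "h \<in> borel_measurable M" "\<And>y. 0 \<le> h y" "(\<integral>\<^sup>+y. ennreal (h y) \<partial>M) \<le> ennreal B" "0 \<le> B"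
  shows "integral\<^sup>L M h \<le> B"
proof -
  have int: "integrable M h"
    by (rule integrableI_nonneg) (use assms in \<open>auto simp: top.not_eq_extremum intro: le_less_trans\<close>)
  have "ennreal (integral\<^sup>L M h) \<le> ennreal B"
    using nn_integral_eq_integral[OF int] assms by simp
  thus ?thesis using assms(4) by (simp add: ennreal_le_iff)
qed

lemma powr_arith2:
  fixes S M :: real
  assumes "S > 0" "M > 0"
  shows "S * ((M/S) powr (1/3)) powr 2 = S powr (1/3) * M powr (2/3)"
    and "M / (M/S) powr (1/3) = S powr (1/3) * M powr (2/3)"
proof -
  have a: "((M/S) powr (1/3)) powr 2 = exp (2/3 * (ln M - ln S))"
    using assms by (simp add: powr_powr powr_def ln_div)
  have b: "(M/S) powr (1/3) = exp (1/3 * (ln M - ln S))"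
    using assms by (simp add: powr_def ln_div)
  have c: "S powr (1/3) * M powr (2/3) = exp (1/3 * ln S + 2/3 * ln M)"
    using assms by (simp add: powr_def exp_add)
  have S: "S = exp (ln S)" "M = exp (ln M)" using assms by auto
  show "S * ((M/S) powr (1/3)) powr 2 = S powr (1/3) * M powr (2/3)"
    unfolding a c by (subst (1) S(1)) (simp flip: exp_add, simp add: field_simps)
  show "M / (M/S) powr (1/3) = S powr (1/3) * M powr (2/3)"
    unfolding b c by (subst (1) S(2)) (simp flip: exp_diff, simp add: field_simps)
qed

definition ck1 :: real where "ck1 = unit_ball_vol 3 * 2 powr 1 / (1 - 2 powr (1-3))"

lemma ck1_pos: "ck1 > 0"
proof -
  have "2 powr (1-3) < (2::real) powr 0" by (intro powr_less_mono) auto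
  thus ?thesis by (simp add: ck1_def)
qed

lemma Bbound:
  fixes \<rho> :: "pt \<Rightarrow> real" and U :: "pt set"
  assumes nonneg: "\<forall>y\<in>U. 0 \<le> \<rho> y" and ub: "\<forall>y\<in>U. \<rho> y \<le> S" and S: "S > 0"
   and int: "set_integrable lebesgue U \<rho>" and M: "(LINT y:U|lebesgue. \<rho> y) = M" and Mpos: "M > 0"
  shows "newton_pot U \<rho> x \<le> (ck1 + 1) * S powr (1/3) * M powr (2/3)"
proof -
  define R where "R = (M/S) powr (1/3)"
  have R: "R > 0" using S Mpos by (simp add: R_def)
  define h where "h y = indicator U y * (\<rho> y / dist x y)" for y
  define g where "g y = indicator U y * \<rho> y" for y
  have g_int: "integrable lebesgue g" using int unfolding set_integrable_def g_def[abs_def] by simp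
  have g_meas: "g \<in> borel_measurable lebesgue" using g_int by simp
  have g_nn: "(\<integral>\<^sup>+y. ennreal (g y) \<partial>lebesgue) = ennreal M"
  proof -
    have "(\<integral>\<^sup>+y. ennreal (g y) \<partial>lebesgue) = ennreal (integral\<^sup>L lebesgue g)"
      by (rule nn_integral_eq_integral[OF g_int]) (use nonneg in \<open>auto simp: g_def indicator_def\<close>)
    also have "integral\<^sup>L lebesgue g = M" using M unfolding set_lebesgue_integral_def g_def[abs_def] by simp
    finally show ?thesis .
  qed
  have dmeas: "(\<lambda>y. dist x y) \<in> borel_measurable lebesgue"
    by (intro measurable_completion) measurable
  have h_meas: "h \<in> borel_measurable lebesgue"
  proof -
    have "h = (\<lambda>y. g y / dist x y)" by (auto simp: h_def g_def fun_eq_iff)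
    thus ?thesis using g_meas dmeas by simp
  qed
  have h_nonneg: "0 \<le> h y" for y using nonneg by (auto simp: h_def indicator_def)
  define k where "k y = indicator (ball x R) y * ennreal (dist x y powr (-1))" for y
  have dm2[measurable]: "(\<lambda>y. dist x y) \<in> borel_measurable lborel"
    using borel_measurable_continuous_onI[OF continuous_on_dist[OF continuous_on_const continuous_on_id]] by simp
  have pm: "(\<lambda>y. ennreal (dist x y powr -1)) \<in> borel_measurable lborel"
    using powr_real_measurable[OF dm2, of "\<lambda>_. -1"] by simp
  have im: "indicator (ball x R) \<in> borel_measurable lborel" by (simp add: borel_measurable_indicator)
  have k_meas: "k \<in> borel_measurable lebesgue"
    unfolding k_def by (intro measurable_completion borel_measurable_times_ennreal pm im)
  have pw: "ennreal (h y) \<le> ennreal S * k y + ennreal (1/R) * ennreal (g y)" for y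
  proof (cases "y \<in> U \<and> y \<noteq> x")
    case False
    then show ?thesis by (auto simp: h_def)
  next
    case True
    then have d: "dist x y > 0" by auto
    have "h y \<le> S * (indicator (ball x R) y * dist x y powr (-1)) + (1/R) * g y"
    proof (cases "dist x y < R")
      case True
      have "\<rho> y / dist x y \<le> S / dist x y" using ub \<open>y \<in> U \<and> y \<noteq> x\<close> d
        by (simp add: divide_right_mono)
      also have "\<dots> = S * (indicator (ball x R) y * dist x y powr (-1))"
        using True d by (simp add: powr_minus divide_inverse)
      finally have X: "\<rho> y / dist x y \<le> S * (indicator (ball x R) y * dist x y powr (-1))" .
      have "0 \<le> \<rho> y / R" using \<open>y \<in> U \<and> y \<noteq> x\<close> nonneg R by simp
      with X show ?thesis using \<open>y \<in> U \<and> y \<noteq> x\<close>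
        by (simp add: h_def g_def)
    next
      case False
      have "\<rho> y / dist x y \<le> \<rho> y / R" using False nonneg \<open>y \<in> U \<and> y \<noteq> x\<close> R
        by (intro divide_left_mono) auto
      thus ?thesis using \<open>y \<in> U \<and> y \<noteq> x\<close> nonneg R S False
        by (simp add: h_def g_def)
    qed
    moreover have "ennreal (S * (indicator (ball x R) y * dist x y powr (-1)) + (1/R) * g y)
       = ennreal S * k y + ennreal (1/R) * ennreal (g y)"
    proof -
      have e1: "ennreal S * ennreal (1 / dist x y) = ennreal (S / dist x y)"
        using S d by (subst ennreal_mult[symmetric]) auto
      have e2: "ennreal (1/R) * ennreal (\<rho> y) = ennreal (\<rho> y / R)"
        using R nonneg True by (subst ennreal_mult[symmetric]) auto
      show ?thesis using S R nonneg True d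
        by (simp add: k_def g_def ennreal_plus indicator_def e1 e2)
    qed
    ultimately show ?thesis by (metis ennreal_leI)
  qed
  have "(\<integral>\<^sup>+y. ennreal (h y) \<partial>lebesgue) \<le> (\<integral>\<^sup>+y. ennreal S * k y + ennreal (1/R) * ennreal (g y) \<partial>lebesgue)"
    by (rule nn_integral_mono) (rule pw)
  also have "\<dots> = ennreal S * (\<integral>\<^sup>+y. k y \<partial>lebesgue) + ennreal (1/R) * ennreal M"
    using k_meas g_meas g_nn by (simp add: nn_integral_add nn_integral_cmult)
  also have "(\<integral>\<^sup>+y. k y \<partial>lebesgue) = (\<integral>\<^sup>+y. k y \<partial>lborel)"
    by (rule nn_integral_completion)
  also have "\<dots> \<le> ennreal (ck1 * R powr 2)"
    using kernel_bound[of 1 R x] R by (simp add: k_def ck1_def)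
  finally have "(\<integral>\<^sup>+y. ennreal (h y) \<partial>lebesgue) \<le> ennreal S * ennreal (ck1 * R powr 2) + ennreal (1/R) * ennreal M"
    by (simp add: mult_left_mono add_right_mono)
  also have "\<dots> = ennreal (S * ck1 * R powr 2 + M / R)"
  proof -
    have e3: "ennreal (1/R) * ennreal M = ennreal (M/R)"
      using R Mpos by (subst ennreal_mult[symmetric]) auto
    show ?thesis using S R Mpos ck1_pos by (simp add: ennreal_plus ennreal_mult e3 mult.assoc)
  qed
  also have "S * ck1 * R powr 2 + M / R = (ck1 + 1) * S powr (1/3) * M powr (2/3)"
    using powr_arith2[OF S Mpos] by (simp add: R_def algebra_simps)
  finally have "(\<integral>\<^sup>+y. ennreal (h y) \<partial>lebesgue) \<le> ennreal ((ck1 + 1) * S powr (1/3) * M powr (2/3))" .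
  from integral_le_from_nn[OF h_meas h_nonneg this] ck1_pos S Mpos
  show ?thesis by (simp add: newton_pot_def set_lebesgue_integral_def h_def)
qed



lemma young_like:
  fixes a d q :: real
  assumes a: "0 \<le> a" and d: "0 \<le> d" and q: "q > 1"
  shows "a / d \<le> a powr q + (if d < 1 then d powr (-(q/(q-1))) else 0) + 1"
proof -
  have pq: "0 \<le> a powr q" by simp
  consider "d = 0" | "d \<ge> 1" | "0 < d" "d < 1" using d by linarith
  then show ?thesis
  proof cases
    case 1 then show ?thesis by simp
  next
    case 2
    have "a / d \<le> a" using a 2 by (simp add: divide_le_eq mult_le_cancel_left1)
    also have "a \<le> a powr q + 1"
    proof (cases "a \<le> 1")
      case True then show ?thesis using pq by linarith
    next
      case False
      then have "a powr 1 \<le> a powr q" using q by (intro powr_mono) auto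
      then show ?thesis using False by simp
    qed
    finally show ?thesis using 2 by simp
  next
    case 3
    have ifeq: "(if d < 1 then d powr (-(q/(q-1))) else 0) = d powr (-(q/(q-1)))" using 3 by simp
    have pp: "0 \<le> d powr (-(q/(q-1)))" by simp
    define t where "t = d powr (-1/(q-1))"
    have t0: "t \<ge> 0" by (simp add: t_def)
    show ?thesis
    proof (cases "a \<le> t")
      case True
      have "a / d \<le> t / d" using True 3 by (simp add: divide_right_mono)
      also have "t / d = d powr (-1/(q-1)) * d powr (-1)" using 3 by (simp add: t_def powr_minus divide_inverse)
      also have "\<dots> = d powr (-(q/(q-1)))"
      proof -
        have "d powr (-1/(q-1)) * d powr (-1) = d powr (-1/(q-1) + -1)" by (simp only: powr_add)
        also have "-1/(q-1) + -1 = -(q/(q-1))" using q by (simp add: field_simps)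
        finally show ?thesis .
      qed
      finally show ?thesis unfolding ifeq using pq by linarith
    next
      case False
      then have apos: "a > 0" using t0 by linarith
      have "t powr (q-1) < a powr (q-1)" using False t0 q by (intro powr_less_mono2) auto
      moreover have "t powr (q-1) = 1/d"
      proof -
        have "t powr (q-1) = d powr ((-1/(q-1)) * (q-1))" by (simp add: t_def powr_powr)
        also have "(-1/(q-1)) * (q-1) = -1" using q by simp
        finally show ?thesis using 3 by (simp add: powr_minus divide_inverse)
      qed
      ultimately have "1/d < a powr (q-1)" by simp
      hence "a * (1/d) \<le> a * a powr (q-1)" using apos by (intro mult_left_mono) auto
      also have "a * a powr (q-1) = a powr q"
      proof -
        have "a powr 1 * a powr (q-1) = a powr (1 + (q-1))" by (simp only: powr_add)
        thus ?thesis using apos by simp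
      qed
      finally have X: "a * (1/d) \<le> a powr q" .
      hence "a / d \<le> a powr q" by simp
      then show ?thesis unfolding ifeq using pp by linarith
    qed
  qed
qed


definition kc :: "real \<Rightarrow> real" where "kc p = unit_ball_vol 3 * 2 powr p / (1 - 2 powr (p-3))"

lemma kc_pos: "p < 3 \<Longrightarrow> kc p > 0"
proof -
  assume "p < 3"
  hence "2 powr (p-3) < (2::real) powr 0" by (intro powr_less_mono) auto
  thus ?thesis by (simp add: kc_def)
qed

lemma PhiK_bound:
  fixes K :: "pt set" and \<rho>K :: "pt \<Rightarrow> real" and q :: real
  assumes Kb: "bounded K" and q: "q > 3" and Lq: "in_Lq q K \<rho>K" and nn: "\<forall>y\<in>K. \<rho>K y \<ge> 0"
  shows "\<exists>CK\<ge>0. \<forall>x. newton_pot K \<rho>K x \<le> CK"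
proof -
  obtain B where B: "B > 0" "K \<subseteq> ball 0 B" using bounded_subset_ballD[OF Kb, of 0] by auto
  define p where "p = q/(q-1)"
  have p0: "p > 0" "p < 3" using q by (auto simp: p_def field_simps)
  have meas: "set_borel_measurable lebesgue K \<rho>K" and int: "set_integrable lebesgue K (\<lambda>y. \<bar>\<rho>K y\<bar> powr q)"
    using Lq by (auto simp: in_Lq_def)
  define G where "G y = indicator K y * \<bar>\<rho>K y\<bar> powr q" for y
  have G_int: "integrable lebesgue G" using int unfolding set_integrable_def G_def[abs_def] by simp
  define Iq where "Iq = integral\<^sup>L lebesgue G"
  have G_nn: "(\<integral>\<^sup>+y. ennreal (G y) \<partial>lebesgue) = ennreal Iq"
    unfolding Iq_def by (rule nn_integral_eq_integral[OF G_int]) (auto simp: G_def)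
  have Iq0: "Iq \<ge> 0" unfolding Iq_def G_def[abs_def] by (rule Bochner_Integration.integral_nonneg) (auto simp: indicator_def)
  define CK where "CK = Iq + kc p + unit_ball_vol 3 * B^3"
  have CK0: "CK \<ge> 0" using Iq0 kc_pos[OF p0(2)] B by (simp add: CK_def)
  have "newton_pot K \<rho>K x \<le> CK" for x
  proof -
    define h where "h y = indicator K y * (\<rho>K y / dist x y)" for y
    have dm2[measurable]: "(\<lambda>y. dist x y) \<in> borel_measurable lborel"
      using borel_measurable_continuous_onI[OF continuous_on_dist[OF continuous_on_const continuous_on_id]] by simp
    have dmeas: "(\<lambda>y. dist x y) \<in> borel_measurable lebesgue"
      by (intro measurable_completion dm2)
    have g_meas: "(\<lambda>y. indicator K y * \<rho>K y) \<in> borel_measurable lebesgue"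
      using meas unfolding set_borel_measurable_def by simp
    have h_meas: "h \<in> borel_measurable lebesgue"
    proof -
      have "h = (\<lambda>y. (indicator K y * \<rho>K y) / dist x y)" by (auto simp: h_def fun_eq_iff)
      thus ?thesis using g_meas dmeas by simp
    qed
    have h_nonneg: "0 \<le> h y" for y using nn by (auto simp: h_def indicator_def)
    define k where "k y = indicator (ball x 1) y * ennreal (dist x y powr (-p))" for y
    have pm: "(\<lambda>y. ennreal (dist x y powr -p)) \<in> borel_measurable lborel"
      using powr_real_measurable[OF dm2, of "\<lambda>_. -p"] by simp
    have im: "indicator (ball x 1) \<in> borel_measurable lborel" by (simp add: borel_measurable_indicator)
    have k_meas: "k \<in> borel_measurable lebesgue"
      unfolding k_def by (intro measurable_completion borel_measurable_times_ennreal pm im)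
    have G_meas: "(\<lambda>y. ennreal (G y)) \<in> borel_measurable lebesgue" using G_int by simp
    have bm: "(indicator (ball (0::pt) B) :: pt \<Rightarrow> ennreal) \<in> borel_measurable lebesgue"
      by (intro measurable_completion) (simp add: borel_measurable_indicator)
    have pw: "ennreal (h y) \<le> ennreal (G y) + k y + indicator (ball 0 B) y" for y
    proof (cases "y \<in> K")
      case False then show ?thesis by (simp add: h_def)
    next
      case True
      have yl: "y \<in> ball 0 B" using True B by auto
      have Y: "\<rho>K y / dist x y \<le> \<rho>K y powr q + (if dist x y < 1 then dist x y powr (-(q/(q-1))) else 0) + 1"
        by (rule young_like) (use nn True q in auto)
      have "ennreal (h y) = ennreal (\<rho>K y / dist x y)" using True by (simp add: h_def)
      also have "\<dots> \<le> ennreal (\<rho>K y powr q + (if dist x y < 1 then dist x y powr (-p) else 0) + 1)"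
        using Y by (intro ennreal_leI) (simp add: p_def split: if_splits)
      also have "\<dots> = ennreal (G y) + k y + indicator (ball 0 B) y"
        using True yl nn by (auto simp: G_def k_def ennreal_plus indicator_def dist_commute)
      finally show ?thesis .
    qed
    have "(\<integral>\<^sup>+y. ennreal (h y) \<partial>lebesgue) \<le> (\<integral>\<^sup>+y. ennreal (G y) + k y + indicator (ball 0 B) y \<partial>lebesgue)"
      by (rule nn_integral_mono) (rule pw)
    also have "\<dots> = (\<integral>\<^sup>+y. ennreal (G y) \<partial>lebesgue) + (\<integral>\<^sup>+y. k y \<partial>lebesgue) + (\<integral>\<^sup>+y. indicator (ball (0::pt) B) y \<partial>lebesgue)"
    proof -
      have m1: "(\<lambda>y. ennreal (G y) + k y) \<in> borel_measurable lebesgue" using G_meas k_meas by measurable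
      show ?thesis using nn_integral_add[OF m1 bm] nn_integral_add[OF G_meas k_meas] by simp
    qed
    also have "(\<integral>\<^sup>+y. k y \<partial>lebesgue) = (\<integral>\<^sup>+y. k y \<partial>lborel)" by (rule nn_integral_completion)
    also have "(\<integral>\<^sup>+y. indicator (ball (0::pt) B) y \<partial>lebesgue) = (\<integral>\<^sup>+y. indicator (ball (0::pt) B) y \<partial>lborel)"
      by (rule nn_integral_completion)
    also have "\<dots> = ennreal (unit_ball_vol 3 * B^3)"
      using emeasure_ball[where c="0::pt" and r=B] B by simp
    also have "(\<integral>\<^sup>+y. k y \<partial>lborel) \<le> ennreal (kc p)"
      using kernel_bound[OF p0, of 1 x] by (simp add: k_def kc_def)
    finally have "(\<integral>\<^sup>+y. ennreal (h y) \<partial>lebesgue) \<le> ennreal Iq + ennreal (kc p) + ennreal (unit_ball_vol 3 * B^3)"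
      unfolding G_nn by (simp add: add_mono)
    also have "\<dots> = ennreal CK"
      using Iq0 kc_pos[OF p0(2)] B by (simp add: CK_def ennreal_plus)
    finally have "(\<integral>\<^sup>+y. ennreal (h y) \<partial>lebesgue) \<le> ennreal CK" .
    from integral_le_from_nn[OF h_meas h_nonneg this CK0]
    show ?thesis by (simp add: newton_pot_def set_lebesgue_integral_def h_def)
  qed
  with CK0 show ?thesis by blast
qed



lemma powr_int:
  fixes s :: real
  assumes s: "s > 0"
  shows "set_integrable lborel {0<..<s} (\<lambda>t::real. t powr (-2/3))"
    and "(LBINT t=0..s. t powr (-2/3)) = 3 * s powr (1/3)"
proof -
  define F where "F x = 3 * x powr (1/3)" for x :: real
  have D: "DERIV F x :> x powr (-2/3)" if "0 < ereal x" "ereal x < ereal s" for x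
  proof -
    have x: "x > 0" using that by simp
    have "DERIV F x :> 3 * (1/3 * x powr (1/3 - 1))"
      unfolding F_def by (intro DERIV_cmult has_real_derivative_powr x)
    thus ?thesis by simp
  qed
  have C: "isCont (\<lambda>t. t powr (-2/3)) x" if "0 < ereal x" "ereal x < ereal s" for x
  proof -
    have x: "x > 0" using that by simp
    show ?thesis by (rule continuous_intros) (use x in auto)
  qed
  have L0: "((F \<circ> real_of_ereal) \<longlongrightarrow> 0) (at_right (ereal 0))"
  proof -
    have "((\<lambda>x. x powr (1/3)) \<longlongrightarrow> (0::real)) (at_right 0)"
      by (rule tendsto_zero_powrI) (auto intro: tendsto_ident_at eventually_at_rightI[of 0 1])
    hence "(F \<longlongrightarrow> 0) (at_right 0)" unfolding F_def using tendsto_mult_left[of _ 0 _ 3] by force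
    thus ?thesis by (simp add: ereal_tendsto_simps)
  qed
  have L1: "((F \<circ> real_of_ereal) \<longlongrightarrow> 3 * s powr (1/3)) (at_left (ereal s))"
  proof -
    have "(F \<longlongrightarrow> F s) (at s)" unfolding F_def using s by (intro tendsto_intros) auto
    hence "(F \<longlongrightarrow> F s) (at_left s)" by (rule filterlim_mono) (auto simp: at_le)
    thus ?thesis by (simp add: ereal_tendsto_simps F_def)
  qed
  have *: "set_integrable lborel (einterval (ereal 0) (ereal s)) (\<lambda>t. t powr (-2/3))"
      "(LBINT x=ereal 0..ereal s. x powr (-2/3)) = 3 * s powr (1/3) - 0"
    by (rule interval_integral_FTC_nonneg[OF _ D C _ L0 L1]; use s in auto)+
  show "set_integrable lborel {0<..<s} (\<lambda>t::real. t powr (-2/3))" using *(1) by simp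
  show "(LBINT t=0..s. t powr (-2/3)) = 3 * s powr (1/3)" using *(2) by (simp add: zero_ereal_def)
qed



lemma F_small:
  assumes FH: "F_hyps f" and e: "\<epsilon> > 0"
  shows "\<exists>\<delta>>0. \<delta> \<le> 1 \<and> (\<forall>t. 0 < t \<and> t < \<delta> \<longrightarrow> f t \<le> \<epsilon> * t powr (4/3))"
proof -
  have lim: "((\<lambda>s. f s / s powr (4/3)) \<longlongrightarrow> 0) (at_right 0)" using FH by (simp add: F_hyps_def)
  have "eventually (\<lambda>s. f s / s powr (4/3) < \<epsilon>) (at_right 0)"
    using order_tendstoD(2)[OF lim e] .
  then obtain b where b: "b > 0" "\<forall>y>0. y < b \<longrightarrow> f y / y powr (4/3) < \<epsilon>"
    unfolding eventually_at_right_field by auto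
  show ?thesis
  proof (intro exI[of _ "min b 1"] conjI allI impI)
    fix t assume t: "0 < t \<and> t < min b 1"
    hence "f t / t powr (4/3) < \<epsilon>" using b by auto
    thus "f t \<le> \<epsilon> * t powr (4/3)" using t by (simp add: divide_less_eq)
  qed (use b in auto)
qed

lemma g_small:
  fixes f :: "real \<Rightarrow> real" and t e :: real
  assumes "f t \<le> e * t powr (4/3)" "t > 0"
  shows "f t / t^2 \<le> e * t powr (-2/3)"
proof -
  have "t^2 = t powr 2" using assms(2) by (simp add: powr_realpow)
  have "f t / t^2 \<le> e * t powr (4/3) / t powr 2" using assms \<open>t^2 = t powr 2\<close> by (simp add: divide_right_mono)
  also have "\<dots> = e * (t powr (4/3) / t powr 2)" by simp
  also have "t powr (4/3) / t powr 2 = t powr (-2/3)" using powr_diff[of t "4/3" 2] by simp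
  finally show ?thesis by simp
qed

lemma g_cont:
  assumes FH: "F_hyps f" and "0 < c"
  shows "continuous_on {c..b} (\<lambda>t. f t / t^2)"
proof -
  have "continuous_on {0..} f" using FH by (simp add: F_hyps_def)
  hence "continuous_on {c..b} f" by (rule continuous_on_subset) (use assms in auto)
  thus ?thesis by (intro continuous_intros) (use assms in auto)
qed

lemma g_integrable:
  assumes FH: "F_hyps f" and b: "b > 0"
  shows "set_integrable lborel {0<..<b} (\<lambda>t. f t / t^2)"
proof -
  obtain \<delta> where d: "\<delta> > 0" "\<forall>t. 0 < t \<and> t < \<delta> \<longrightarrow> f t \<le> 1 * t powr (4/3)"
    using F_small[OF FH, of 1] by auto
  define d where "d = min \<delta> b / 2"
  have d0: "d > 0" "d < b" "d < \<delta>" using d b by (auto simp: d_def)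
  have f0: "\<forall>s\<ge>0. f s \<ge> 0" using FH by (simp add: F_hyps_def)
  have fc: "continuous_on {0..} f" using FH by (simp add: F_hyps_def)
  have i1: "set_integrable lborel {0<..<d} (\<lambda>t. f t / t^2)"
  proof (rule set_integrable_bound[OF powr_int(1)[OF d0(1)]])
    have "continuous_on {0<..<d} (\<lambda>t. f t / t^2)"
    proof -
      have "continuous_on {0<..<d} f" by (rule continuous_on_subset[OF fc]) auto
      thus ?thesis by (intro continuous_intros) auto
    qed
    thus "set_borel_measurable lborel {0<..<d} (\<lambda>t. f t / t^2)"
      unfolding set_borel_measurable_def
      by (simp only: measurable_lborel2) (rule borel_measurable_continuous_on_indicator; auto)
    show "AE x in lborel. x \<in> {0<..<d} \<longrightarrow> norm (f x / x^2) \<le> norm (x powr (-2/3))"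
    proof (rule AE_I2, rule impI)
      fix x assume x: "x \<in> {0<..<d}"
      have "f x / x^2 \<le> 1 * x powr (-2/3)" by (rule g_small) (use x d d0 in auto)
      moreover have "0 \<le> f x / x^2" using f0 x by simp
      ultimately show "norm (f x / x^2) \<le> norm (x powr (-2/3))" by simp
    qed
  qed
  have i2: "set_integrable lborel {d..b} (\<lambda>t. f t / t^2)"
    by (rule borel_integrable_atLeastAtMost') (rule g_cont[OF FH d0(1)])
  have "set_integrable lborel ({0<..<d} \<union> {d..b}) (\<lambda>t. f t / t^2)"
    by (rule set_integrable_Un[OF i1 i2]) auto
  thus ?thesis by (rule set_integrable_subset) auto
qed



definition Fint :: "(real \<Rightarrow> real) \<Rightarrow> real \<Rightarrow> real" where
  "Fint f s = (LBINT t=0..s. f t / t^2)"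

lemma Fint_set: "s > 0 \<Longrightarrow> Fint f s = (LBINT t:{0<..<s}. f t / t^2)"
  unfolding Fint_def by (subst interval_integral_Ioo) auto

lemma A_deriv:
  assumes FH: "F_hyps f" and s: "s > 0"
  shows "(A_fun f has_real_derivative (Fint f s + f s / s)) (at s)"
proof -
  define g where "g t = f t / t^2" for t :: real
  define c where "c = s/2"
  define ee where "ee = 2 * s"
  have c: "0 < c" "c < s" "s < ee" using s by (auto simp: c_def ee_def)
  have ie: "set_integrable lborel {0<..<ee} g" unfolding g_def by (rule g_integrable[OF FH]) (use c in auto)
  have sum: "Fint f u = Fint f c + (LBINT t=c..u. g t)" if u: "u \<in> {c<..<ee}" for u
  proof -
    have "interval_lebesgue_integrable lborel (min (ereal 0) (min (ereal c) (ereal u))) (max (ereal 0) (max (ereal c) (ereal u))) g"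
    proof -
      have "min (ereal 0) (min (ereal c) (ereal u)) = ereal 0" using c u by auto
      moreover have "max (ereal 0) (max (ereal c) (ereal u)) = ereal u" using c u by auto
      moreover have "set_integrable lborel {0<..<u} g"
        by (rule set_integrable_subset[OF ie]) (use u in auto)
      ultimately show ?thesis using c u by (simp add: interval_lebesgue_integrable_def)
    qed
    from interval_integral_sum[OF this] show ?thesis by (simp add: Fint_def g_def zero_ereal_def)
  qed
  have "((\<lambda>u. LBINT y=c..u. g y) has_vector_derivative g s) (at s within {c..ee})"
    by (rule interval_integral_FTC2) (use c in \<open>auto simp: g_def intro: g_cont[OF FH]\<close>)
  moreover have "at s within {c..ee} = at s"
    by (rule at_within_interior) (use c in auto)
  ultimately have "((\<lambda>u. LBINT y=c..u. g y) has_real_derivative g s) (at s)"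
    by (simp add: has_real_derivative_iff_has_vector_derivative)
  hence "((\<lambda>u. Fint f c + (LBINT y=c..u. g y)) has_real_derivative g s) (at s)"
    using DERIV_add[OF DERIV_const] by fastforce
  hence dF: "(Fint f has_real_derivative g s) (at s)"
    by (rule has_field_derivative_transform_within_open[of _ _ _ "{c<..<ee}"]) (use c sum in auto)
  have "((\<lambda>u. u * Fint f u) has_real_derivative (1 * Fint f s + g s * s)) (at s)"
    by (rule DERIV_mult[OF DERIV_ident dF])
  moreover have "A_fun f = (\<lambda>u. u * Fint f u)" by (auto simp: A_fun_def Fint_def fun_eq_iff)
  moreover have "1 * Fint f s + g s * s = Fint f s + f s / s" using s by (simp add: g_def power2_eq_square)
  ultimately show ?thesis by simp
qed

lemma deriv_A: "F_hyps f \<Longrightarrow> s > 0 \<Longrightarrow> deriv (A_fun f) s = Fint f s + f s / s"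
  using A_deriv DERIV_imp_deriv by blast

lemma Fint_nonneg:
  assumes FH: "F_hyps f" and s: "s > 0"
  shows "Fint f s \<ge> 0"
proof -
  have f0: "\<forall>s\<ge>0. f s \<ge> 0" using FH by (simp add: F_hyps_def)
  show ?thesis unfolding Fint_set[OF s] set_lebesgue_integral_def
    by (rule Bochner_Integration.integral_nonneg) (use f0 in \<open>auto simp: indicator_def\<close>)
qed

lemma Fint_mono:
  assumes FH: "F_hyps f" and s: "0 < s" "s \<le> S"
  shows "Fint f s \<le> Fint f S"
proof -
  have f0: "\<forall>s\<ge>0. f s \<ge> 0" using FH by (simp add: F_hyps_def)
  have iS: "set_integrable lborel {0<..<S} (\<lambda>t. f t / t^2)" by (rule g_integrable[OF FH]) (use s in auto)
  have is0: "set_integrable lborel {0<..<s} (\<lambda>t. f t / t^2)" by (rule g_integrable[OF FH]) (use s in auto)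
  have S0: "S > 0" using s by simp
  show ?thesis unfolding Fint_set[OF s(1)] Fint_set[OF S0]
    unfolding set_lebesgue_integral_def
  proof (rule integral_mono)
    show "integrable lborel (\<lambda>x. indicat_real {0<..<s} x *\<^sub>R (f x / x\<^sup>2))"
      using is0 by (simp add: set_integrable_def)
    show "integrable lborel (\<lambda>x. indicat_real {0<..<S} x *\<^sub>R (f x / x\<^sup>2))"
      using iS by (simp add: set_integrable_def)
    fix x :: real
    show "indicat_real {0<..<s} x *\<^sub>R (f x / x\<^sup>2) \<le> indicat_real {0<..<S} x *\<^sub>R (f x / x\<^sup>2)"
      using f0 s by (auto simp: indicator_def)
  qed
qed

lemma Fint_small:
  assumes FH: "F_hyps f" and s: "0 < s" and le: "\<forall>t. 0 < t \<and> t < s \<longrightarrow> f t \<le> ep * t powr (4/3)"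
    and ep: "ep \<ge> 0"
  shows "Fint f s \<le> ep * (3 * s powr (1/3))"
proof -
  have i1: "set_integrable lborel {0<..<s} (\<lambda>t. f t / t^2)" by (rule g_integrable[OF FH s])
  have i2: "set_integrable lborel {0<..<s} (\<lambda>t. ep * t powr (-2/3))"
    using set_integrable_mult_right[OF powr_int(1)[OF s], of ep] by simp
  have "Fint f s \<le> (LBINT t:{0<..<s}. ep * t powr (-2/3))"
    unfolding Fint_set[OF s]
  proof (rule set_integral_mono[OF i1 i2])
    fix t assume "t \<in> {0<..<s}"
    thus "f t / t^2 \<le> ep * t powr (-2/3)" using le by (intro g_small) auto
  qed
  also have "\<dots> = ep * (LBINT t:{0<..<s}. t powr (-2/3))" by (simp add: set_integral_mult_right)
  also have "(LBINT t:{0<..<s}. t powr (-2/3)) = 3 * s powr (1/3)"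
    using powr_int(2)[OF s] s by (simp add: interval_integral_Ioo)
  finally show ?thesis .
qed



lemma f_over_s:
  fixes f :: "real \<Rightarrow> real"
  assumes "f s \<le> c * s powr (4/3)" "s > 0"
  shows "f s / s \<le> c * s powr (1/3)"
proof -
  have "f s / s \<le> c * s powr (4/3) / s" using assms by (simp add: divide_right_mono)
  also have "\<dots> = c * (s powr (4/3) / s powr 1)" using assms by simp
  also have "s powr (4/3) / s powr 1 = s powr (1/3)" using powr_diff[of s "4/3" 1] by simp
  finally show ?thesis .
qed

lemma a_small:
  assumes FH: "F_hyps f" and e: "\<epsilon> > 0"
  shows "\<exists>\<eta>>0. \<forall>s. 0 < s \<and> s < \<eta> \<longrightarrow> deriv (A_fun f) s < \<epsilon>"
proof -
  obtain \<delta> where d: "\<delta> > 0" "\<delta> \<le> 1" "\<forall>t. 0 < t \<and> t < \<delta> \<longrightarrow> f t \<le> (\<epsilon>/8) * t powr (4/3)"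
    using F_small[OF FH, of "\<epsilon>/8"] e by auto
  show ?thesis
  proof (intro exI[of _ \<delta>] conjI allI impI)
    fix s assume s: "0 < s \<and> s < \<delta>"
    have p1: "s powr (1/3) \<le> 1" by (rule powr_le1) (use s d in auto)
    have "Fint f s \<le> (\<epsilon>/8) * (3 * s powr (1/3))"
      by (rule Fint_small[OF FH]) (use s d e in auto)
    also have "\<dots> \<le> (\<epsilon>/8) * 3" using p1 e by simp
    finally have A: "Fint f s \<le> 3 * \<epsilon> / 8" by simp
    have "f s / s \<le> (\<epsilon>/8) * s powr (1/3)" by (rule f_over_s) (use s d in auto)
    also have "\<dots> \<le> \<epsilon>/8" using p1 e by simp
    finally have B: "f s / s \<le> \<epsilon>/8" .
    have "deriv (A_fun f) s = Fint f s + f s / s" using deriv_A[OF FH, of s] s by simp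
    thus "deriv (A_fun f) s < \<epsilon>" using A B e by linarith
  qed (use d in auto)
qed

lemma a_bounded:
  assumes FH: "F_hyps f" and S: "S > 0"
  shows "\<exists>Bd. \<forall>s. 0 < s \<and> s \<le> S \<longrightarrow> deriv (A_fun f) s \<le> Bd"
proof -
  obtain \<delta> where d: "\<delta> > 0" "\<delta> \<le> 1" "\<forall>t. 0 < t \<and> t < \<delta> \<longrightarrow> f t \<le> 1 * t powr (4/3)"
    using F_small[OF FH, of 1] by auto
  have f0: "\<forall>s\<ge>0. f s \<ge> 0" and sm: "strict_mono_on {0<..} f" using FH by (auto simp: F_hyps_def)
  show ?thesis
  proof (intro exI[of _ "Fint f S + 1 + f S / \<delta>"] allI impI)
    fix s assume s: "0 < s \<and> s \<le> S"
    have A: "Fint f s \<le> Fint f S" by (rule Fint_mono[OF FH]) (use s in auto)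
    have B: "f s / s \<le> 1 + f S / \<delta>"
    proof (cases "s < \<delta>")
      case True
      have "f s / s \<le> 1 * s powr (1/3)" by (rule f_over_s) (use s d True in auto)
      also have "\<dots> \<le> 1" using powr_le1[of "1/3" s] s True d by simp
      finally have "f s / s \<le> 1" .
      moreover have "0 \<le> f S / \<delta>" using f0 S d by simp
      ultimately show ?thesis by linarith
    next
      case False
      have fs: "f s \<le> f S"
      proof (cases "s = S")
        case False
        hence "s < S" using s by simp
        thus ?thesis using strict_mono_onD[OF sm, of s S] s by auto
      qed simp
      have "f s / s \<le> f S / s" using fs s by (simp add: divide_right_mono)
      also have "\<dots> \<le> f S / \<delta>" using False s d f0 S by (intro divide_left_mono) auto
      finally show ?thesis by simp
    qed
    show "deriv (A_fun f) s \<le> Fint f S + 1 + f S / \<delta>" using deriv_A[OF FH, of s] s A B by simp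
  qed
qed

lemma a_lower:
  assumes FH: "F_hyps f" and s: "s > 0"
  shows "f s / s \<le> deriv (A_fun f) s"
  using deriv_A[OF FH s] Fint_nonneg[OF FH s] by simp



lemma newton_pot_nonneg:
  assumes "\<forall>y\<in>U. 0 \<le> g y"
  shows "0 \<le> newton_pot U g x"
  unfolding newton_pot_def set_lebesgue_integral_def
  by (rule Bochner_Integration.integral_nonneg) (use assms in \<open>auto simp: indicator_def\<close>)

lemma ray_r:
  fixes x :: pt and t :: real
  assumes "t \<ge> 0"
  shows "cyl_r (x + t *\<^sub>R vector [x$1, x$2, 0]) = (1+t) * cyl_r x"
proof -
  have "cyl_r (x + t *\<^sub>R vector [x$1, x$2, 0]) = sqrt ((1+t)^2 * ((x$1)^2 + (x$2)^2))"
    unfolding cyl_r_def by (simp add: algebra_simps power2_eq_square)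
  also have "\<dots> = (1+t) * cyl_r x" using assms by (simp add: real_sqrt_mult cyl_r_def)
  finally show ?thesis .
qed

lemma ray_bound:
  fixes K :: "pt set" and \<rho> P :: "pt \<Rightarrow> real"
  assumes FH: "F_hyps f" and notrap: "no_trapping K"
    and nonneg: "\<forall>y\<in>-K. \<rho> y \<ge> 0" and bnd: "\<forall>y\<in>-K. \<rho> y \<le> S" and S: "S > 0"
    and cont: "continuous_on (-K) \<rho>"
    and EL: "\<forall>y\<in>-K. \<rho> y > 0 \<longrightarrow> deriv (A_fun f) (\<rho> y) = lam + (1/2) * \<Omega>^2 * (cyl_r y)^2 + P y"
    and Pnn: "\<forall>y. P y \<ge> 0" and Om: "\<Omega> \<ge> 1"
    and x: "x \<in> -K" "\<rho> x > 0" "cyl_r x > 0"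
  shows "lam + (1/2) * \<Omega>^2 * (cyl_r x)^2 \<le> 0"
proof (rule ccontr)
  define r where "r = cyl_r x"
  define c0 where "c0 = lam + (1/2) * \<Omega>^2 * r^2"
  assume "\<not> lam + (1/2) * \<Omega>^2 * (cyl_r x)^2 \<le> 0"
  hence c0: "c0 > 0" by (simp add: c0_def r_def)
  define p where "p t = x + t *\<^sub>R vector [x$1, x$2, 0]" for t :: real
  have pK: "p t \<in> -K" if "t \<ge> 0" for t
    using notrap x that unfolding no_trapping_def p_def by auto
  have rp: "cyl_r (p t) = (1+t) * r" if "t \<ge> 0" for t
    using ray_r[OF that] by (simp add: p_def r_def)
  have r0: "r > 0" using x by (simp add: r_def)
  have key: "deriv (A_fun f) (\<rho> (p t)) \<ge> lam + (1/2) * \<Omega>^2 * ((1+t) * r)^2"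
    if t: "t \<ge> 0" "\<rho> (p t) > 0" for t
    using EL pK[OF t(1)] t Pnn rp[OF t(1)] by force
  have key2: "deriv (A_fun f) (\<rho> (p t)) \<ge> c0" if t: "t \<ge> 0" "\<rho> (p t) > 0" for t
  proof -
    have "r^2 \<le> ((1+t) * r)^2" using t r0 by (intro power_mono) auto
    hence "(1/2) * \<Omega>^2 * r^2 \<le> (1/2) * \<Omega>^2 * ((1+t) * r)^2" by (intro mult_left_mono) auto
    thus ?thesis using key[OF t] by (simp add: c0_def)
  qed
  have pcont: "continuous_on {0..} (\<lambda>t. \<rho> (p t))"
    by (rule continuous_on_compose2[OF cont]) (use pK in \<open>auto simp: p_def intro!: continuous_intros\<close>)
  show False
  proof (cases "\<forall>t\<ge>0. \<rho> (p t) > 0")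
    case True
    obtain Bd where Bd: "\<forall>s. 0 < s \<and> s \<le> S \<longrightarrow> deriv (A_fun f) s \<le> Bd" using a_bounded[OF FH S] by auto
    define t where "t = 2 * (\<bar>Bd\<bar> + \<bar>lam\<bar> + 1) / r^2"
    have t0: "t \<ge> 0" by (simp add: t_def)
    have "deriv (A_fun f) (\<rho> (p t)) \<le> Bd" using Bd True t0 bnd pK[OF t0] by auto
    moreover have "deriv (A_fun f) (\<rho> (p t)) \<ge> lam + (1/2) * \<Omega>^2 * ((1+t) * r)^2" using key True t0 by auto
    moreover have "(1/2) * \<Omega>^2 * ((1+t) * r)^2 \<ge> (1/2) * (t * r^2)"
    proof -
      have "t \<le> (1+t)^2" using t0 by (simp add: power2_eq_square algebra_simps)
      hence "t * r^2 \<le> (1+t)^2 * r^2" by (intro mult_right_mono) auto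
      also have "\<dots> \<le> \<Omega>^2 * ((1+t)^2 * r^2)"
      proof -
        have O2: "1 \<le> \<Omega>^2" using Om by (simp add: one_le_power)
        show ?thesis using mult_right_mono[OF O2, of "(1+t)^2 * r^2"] by simp
      qed
      finally show ?thesis by (simp add: power_mult_distrib)
    qed
    moreover have "t * r^2 = 2 * (\<bar>Bd\<bar> + \<bar>lam\<bar> + 1)" using r0 by (simp add: t_def)
    moreover have "Bd \<le> \<bar>Bd\<bar>" "- lam \<le> \<bar>lam\<bar>" by auto
    ultimately show False
    proof -
      fix X assume h: "deriv (A_fun f) (\<rho> (p t)) \<le> Bd" "lam + X \<le> deriv (A_fun f) (\<rho> (p t))"
        "1/2 * (t * r^2) \<le> X" "t * r^2 = 2 * (\<bar>Bd\<bar> + \<bar>lam\<bar> + 1)" "Bd \<le> \<bar>Bd\<bar>" "- lam \<le> \<bar>lam\<bar>"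
      from h show False by argo
    qed
  next
    case False
    define T where "T = {0..} \<inter> (\<lambda>t. \<rho> (p t)) -` {0}"
    have Tne: "T \<noteq> {}" using False nonneg pK by (force simp: T_def)
    have Tbdd: "bdd_below T" by (auto simp: T_def bdd_below_def)
    have Tcl: "closed T" unfolding T_def by (rule continuous_closed_preimage[OF pcont]) auto
    define ts where "ts = Inf T"
    have tsT: "ts \<in> T" unfolding ts_def by (rule closed_contains_Inf[OF Tne Tbdd Tcl])
    have before: "\<rho> (p t) > 0" if "0 \<le> t" "t < ts" for t
    proof -
      have "t \<notin> T" using cInf_lower[OF _ Tbdd, of t] that by (auto simp: ts_def)
      thus ?thesis using that nonneg pK[OF that(1)] by (force simp: T_def)
    qed
    have p0: "p 0 = x" by (simp add: p_def)
    have ts0: "ts > 0"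
    proof -
      have "ts \<ge> 0" using tsT by (simp add: T_def)
      moreover have "ts \<noteq> 0" using tsT x p0 by (auto simp: T_def)
      ultimately show ?thesis by simp
    qed
    have rts: "\<rho> (p ts) = 0" using tsT by (simp add: T_def)
    obtain \<eta> where eta: "\<eta> > 0" "\<forall>s. 0 < s \<and> s < \<eta> \<longrightarrow> deriv (A_fun f) s < c0"
      using a_small[OF FH c0] by auto
    obtain \<delta> where dl: "\<delta> > 0" "\<forall>t\<in>{0..}. dist t ts < \<delta> \<longrightarrow> dist (\<rho> (p t)) (\<rho> (p ts)) < \<eta>"
      using pcont tsT eta(1) unfolding continuous_on_iff T_def by blast
    define t where "t = ts - min \<delta> ts / 2"
    have t: "0 \<le> t" "t < ts" "dist t ts < \<delta>" using dl ts0 by (auto simp: t_def dist_real_def)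
    have pos: "\<rho> (p t) > 0" by (rule before) (use t in auto)
    have "\<bar>\<rho> (p t) - \<rho> (p ts)\<bar> < \<eta>" using dl(2) t by (auto simp: dist_real_def)
    hence "\<rho> (p t) < \<eta>" using rts by simp
    hence "deriv (A_fun f) (\<rho> (p t)) < c0" using eta pos by auto
    moreover have "deriv (A_fun f) (\<rho> (p t)) \<ge> c0" using key2 t pos by auto
    ultimately show False by simp
  qed
qed



lemma off_axis:
  fixes \<rho> :: "pt \<Rightarrow> real" and U :: "pt set"
  assumes int: "set_integrable lebesgue U \<rho>" and M: "(LINT y:U|lebesgue. \<rho> y) = M" and Mpos: "M > 0"
    and nn: "\<forall>y\<in>U. \<rho> y \<ge> 0"
  shows "\<exists>y\<in>U. \<rho> y > 0 \<and> cyl_r y > 0"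
proof (rule ccontr)
  assume "\<not> ?thesis"
  hence H: "\<forall>y\<in>U. \<rho> y > 0 \<longrightarrow> cyl_r y = 0" using cyl_r_def by (auto simp: cyl_r_def less_le)
  define N where "N = {x::pt. axis 1 1 \<bullet> x = 0}"
  have Nn: "N \<in> null_sets lebesgue"
    using negligible_hyperplane[of "axis 1 (1::real)" 0] by (simp add: N_def negligible_iff_null_sets axis_eq_0_iff)
  have ae: "AE y in lebesgue. indicator U y *\<^sub>R \<rho> y = (0::real)"
  proof (rule AE_I'[OF Nn])
    show "{x \<in> space lebesgue. \<not> indicator U x *\<^sub>R \<rho> x = 0} \<subseteq> N"
    proof
      fix x assume "x \<in> {x \<in> space lebesgue. \<not> indicator U x *\<^sub>R \<rho> x = (0::real)}"
      hence x: "x \<in> U" "\<rho> x \<noteq> 0" by (auto simp: indicator_def split: if_splits)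
      hence "cyl_r x = 0" using H nn by (auto simp: less_le)
      hence "x$1 = 0" unfolding cyl_r_def by (simp add: sum_power2_eq_zero_iff)
      thus "x \<in> N" by (simp add: N_def inner_axis')
    qed
  qed
  have "M = integral\<^sup>L lebesgue (\<lambda>y. indicator U y *\<^sub>R \<rho> y)" using M by (simp add: set_lebesgue_integral_def)
  also have "\<dots> = integral\<^sup>L lebesgue (\<lambda>y. 0::real)"
  proof -
    have m: "(\<lambda>y. indicator U y *\<^sub>R \<rho> y) \<in> borel_measurable lebesgue"
      using int by (simp add: set_integrable_def)
    show ?thesis using Bochner_Integration.integral_cong_AE[OF m _ ae] by simp
  qed
  finally show False using Mpos by simp
qed



lemma final_arith:
  fixes S s L cB CK T :: real and f :: "real \<Rightarrow> real"
  assumes S: "S > 0" and s: "S/2 < s" "s \<le> S"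
    and L: "f s / s powr (4/3) \<ge> 2 powr (1/3) * (cB + 1)" and cB: "cB \<ge> 0"
    and up: "f s / s \<le> cB * S powr (1/3) + CK"
  shows "S \<le> (max CK 1)^3"
proof -
  have s0: "s > 0" using S s by simp
  have e1: "f s / s = (f s / s powr (4/3)) * s powr (1/3)"
  proof -
    have "s powr (4/3) = s * s powr (1/3)" using powr_add[of s 1 "1/3"] s0 by simp
    thus ?thesis using s0 by simp
  qed
  have m: "(S/2) powr (1/3) \<le> s powr (1/3)" using s S by (intro powr_mono2) auto
  have e2: "2 powr (1/3) * (S/2) powr (1/3) = S powr (1/3)"
    using S by (simp flip: powr_mult)
  have "(cB + 1) * S powr (1/3) = (cB+1) * (2 powr (1/3) * (S/2) powr (1/3))" using e2 by simp
  also have "\<dots> = (2 powr (1/3) * (cB + 1)) * (S/2) powr (1/3)" by (simp add: algebra_simps)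
  also have "\<dots> \<le> (f s / s powr (4/3)) * s powr (1/3)"
  proof -
    have "0 \<le> 2 powr (1/3) * (cB + 1)" using cB by simp
    hence "0 \<le> f s / s powr (4/3)" using L by linarith
    thus ?thesis using L m cB by (intro mult_mono) auto
  qed
  also have "\<dots> = f s / s" using e1 by simp
  finally have "(cB + 1) * S powr (1/3) \<le> cB * S powr (1/3) + CK" using up by simp
  hence "S powr (1/3) \<le> CK" by (simp add: algebra_simps)
  hence a: "S powr (1/3) \<le> max CK 1" by simp
  have "S = (S powr (1/3))^3"
  proof -
    have "(S powr (1/3))^3 = (S powr (1/3)) powr 3" using powr_realpow[of "S powr (1/3)" 3] S by simp
    also have "\<dots> = S" using S by (simp add: powr_powr)
    finally show ?thesis by simp
  qed
  also have "\<dots> \<le> (max CK 1)^3" using a by (intro power_mono) auto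
  finally show ?thesis .
qed

theorem mainTheorem13:
  fixes K :: "pt set" and f :: "real \<Rightarrow> real" and \<rho>K :: "pt \<Rightarrow> real"
    and q M :: real
  assumes K_domain: "open K" "connected K" "bounded K"
    and K_axisym: "axisym_set K"
    and K_notrap: "no_trapping K"
    and f_hyps: "F_hyps f"
    and q_gt: "q > 3"
    and \<rho>K_Lq: "in_Lq q K \<rho>K"
    and \<rho>K_nonneg: "\<forall>y\<in>K. \<rho>K y \<ge> 0"
    and \<rho>K_axisym: "axisym_fun_on K \<rho>K"
    and M_pos: "M > 0"
  shows "\<exists>C1>0. \<forall>(\<Omega>::real) (\<rho>::pt \<Rightarrow> real) (lam::real).
           \<Omega> \<ge> 1
         \<and> (\<forall>x\<in>-K. \<rho> x \<ge> 0)
         \<and> bounded (\<rho> ` (-K))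
         \<and> continuous_on (-K) \<rho>
         \<and> set_integrable lebesgue (-K) \<rho>
         \<and> (LINT y:(-K)|lebesgue. \<rho> y) = M
         \<and> (\<forall>x\<in>-K. \<rho> x > 0 \<longrightarrow>
              deriv (A_fun f) (\<rho> x) - newton_pot (-K) \<rho> x
                - (1/2) * \<Omega>^2 * (cyl_r x)^2 - newton_pot K \<rho>K x = lam)
         \<longrightarrow> (\<forall>x\<in>-K. \<rho> x \<le> C1)"
proof -
  obtain CK where CK: "CK \<ge> 0" "\<forall>x. newton_pot K \<rho>K x \<le> CK"
    using PhiK_bound[OF K_domain(3) q_gt \<rho>K_Lq \<rho>K_nonneg] by auto
  define cB where "cB = (ck1 + 1) * M powr (2/3)"
  have cB0: "cB \<ge> 0" using ck1_pos by (simp add: cB_def)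
  define L where "L = 2 powr (1/3) * (cB + 1)"
  have ft: "filterlim (\<lambda>s. f s / s powr (4/3)) at_top at_top" using f_hyps by (simp add: F_hyps_def)
  have "eventually (\<lambda>s. L \<le> f s / s powr (4/3)) at_top"
    using ft by (simp add: filterlim_at_top)
  then obtain T where T: "\<forall>s\<ge>T. L \<le> f s / s powr (4/3)"
    unfolding eventually_at_top_linorder by auto
  define C1 where "C1 = max (2 * max T 1) ((max CK 1)^3)"
  have C1pos: "C1 > 0" by (simp add: C1_def)
  show ?thesis
  proof (intro exI[of _ C1] conjI C1pos allI impI ballI)
    fix \<Omega> :: real and \<rho> :: "pt \<Rightarrow> real" and lam :: real and x
    assume H: "\<Omega> \<ge> 1
         \<and> (\<forall>x\<in>-K. \<rho> x \<ge> 0)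
         \<and> bounded (\<rho> ` (-K))
         \<and> continuous_on (-K) \<rho>
         \<and> set_integrable lebesgue (-K) \<rho>
         \<and> (LINT y:(-K)|lebesgue. \<rho> y) = M
         \<and> (\<forall>x\<in>-K. \<rho> x > 0 \<longrightarrow>
              deriv (A_fun f) (\<rho> x) - newton_pot (-K) \<rho> x
                - (1/2) * \<Omega>^2 * (cyl_r x)^2 - newton_pot K \<rho>K x = lam)"
    assume x: "x \<in> -K"
    from H have Om: "\<Omega> \<ge> 1" and nn: "\<forall>x\<in>-K. \<rho> x \<ge> 0" and bd: "bounded (\<rho> ` (-K))"
      and cont: "continuous_on (-K) \<rho>" and int: "set_integrable lebesgue (-K) \<rho>"
      and Mi: "(LINT y:(-K)|lebesgue. \<rho> y) = M"
      and EL0: "\<forall>x\<in>-K. \<rho> x > 0 \<longrightarrow>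
              deriv (A_fun f) (\<rho> x) - newton_pot (-K) \<rho> x
                - (1/2) * \<Omega>^2 * (cyl_r x)^2 - newton_pot K \<rho>K x = lam" by auto
    show "\<rho> x \<le> C1"
    proof (rule ccontr)
      assume "\<not> \<rho> x \<le> C1"
      hence xC: "\<rho> x > C1" by simp
      define S where "S = Sup (\<rho> ` (-K))"
      have ne: "\<rho> ` (-K) \<noteq> {}" using x by auto
      have bda: "bdd_above (\<rho> ` (-K))" using bd by (rule bounded_imp_bdd_above)
      have leS: "\<forall>y\<in>-K. \<rho> y \<le> S" unfolding S_def using bda by (auto intro: cSup_upper)
      have SC: "S > C1" using leS x xC by force
      have S0: "S > 0" using SC C1pos by simp
      define P where "P y = newton_pot (-K) \<rho> y + newton_pot K \<rho>K y" for y
      have Pnn: "\<forall>y. P y \<ge> 0" unfolding P_def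
        using newton_pot_nonneg[OF nn] newton_pot_nonneg[OF \<rho>K_nonneg] by (simp add: add_nonneg_nonneg)
      have EL: "\<forall>y\<in>-K. \<rho> y > 0 \<longrightarrow> deriv (A_fun f) (\<rho> y) = lam + (1/2) * \<Omega>^2 * (cyl_r y)^2 + P y"
        using EL0 by (auto simp: P_def algebra_simps)
      have rb: "lam + (1/2) * \<Omega>^2 * (cyl_r y)^2 \<le> 0" if "y \<in> -K" "\<rho> y > 0" "cyl_r y > 0" for y
        by (rule ray_bound[OF f_hyps K_notrap nn leS S0 cont EL Pnn Om that])
      obtain y0 where y0: "y0 \<in> -K" "\<rho> y0 > 0" "cyl_r y0 > 0"
        using off_axis[OF int Mi M_pos nn] by auto
      have lam0: "lam \<le> 0"
      proof -
        have "0 \<le> (1/2) * \<Omega>^2 * (cyl_r y0)^2" by simp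
        thus ?thesis using rb[OF y0] by linarith
      qed
      have "\<exists>y\<in>\<rho> ` (-K). S/2 < y" using less_cSup_iff[OF ne bda, of "S/2"] S0 by (simp add: S_def)
      then obtain y where y: "y \<in> -K" "S/2 < \<rho> y" by auto
      have ys: "\<rho> y \<le> S" using leS y by auto
      have ypos: "\<rho> y > 0" using y S0 by linarith
      have c1: "lam + (1/2) * \<Omega>^2 * (cyl_r y)^2 \<le> 0"
      proof (cases "cyl_r y > 0")
        case True thus ?thesis using rb y ypos by auto
      next
        case False
        moreover have "cyl_r y \<ge> 0" by (simp add: cyl_r_def)
        ultimately have "cyl_r y = 0" by simp
        thus ?thesis using lam0 by simp
      qed
      have B: "newton_pot (-K) \<rho> y \<le> (ck1 + 1) * S powr (1/3) * M powr (2/3)"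
        by (rule Bbound[OF nn leS S0 int Mi M_pos])
      have up: "f (\<rho> y) / \<rho> y \<le> cB * S powr (1/3) + CK"
      proof -
        have "f (\<rho> y) / \<rho> y \<le> deriv (A_fun f) (\<rho> y)" by (rule a_lower[OF f_hyps ypos])
        also have "\<dots> = lam + (1/2) * \<Omega>^2 * (cyl_r y)^2 + P y" using EL y ypos by auto
        also have "\<dots> \<le> cB * S powr (1/3) + CK"
          using c1 B CK(2)[rule_format, of y] by (simp add: P_def cB_def algebra_simps)
        finally show ?thesis .
      qed
      have yT: "\<rho> y \<ge> T"
      proof -
        have "S > 2 * max T 1" using SC by (simp add: C1_def)
        thus ?thesis using y by linarith
      qed
      have Lf: "f (\<rho> y) / \<rho> y powr (4/3) \<ge> 2 powr (1/3) * (cB + 1)" using T yT by (simp add: L_def)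
      have "S \<le> (max CK 1)^3" by (rule final_arith[where f=f and s="\<rho> y", OF S0 y(2) ys Lf cB0 up])
      moreover have "(max CK 1)^3 \<le> C1" by (simp add: C1_def)
      ultimately show False using SC by simp
    qed
  qed
qed


end
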